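(* Let $P$ and $Q$ be lattice paths from $(0,0)$ to $(m,r)$ with $P$ never going above $Q$ such that the region bounded by $P$ and $Q$ is a border strip. Then the number of facets of the lattice path matroid polytope $\mathcal{P}(M[P,Q])$ is $m+r+d$, where $d$ is the number of outside corners of the region $[P,Q]$.
   Context: Lattice paths use steps $E=(1,0)$, $N=(0,1)$. For $P,Q$ from $(0,0)$ to $(m,r)$ with $P$ never above $Q$, $M[P,Q]$ is the matroid on $[m+r]$ whose bases are the $r$-subsets $B$ such that the lattice path with North steps exactly at positions in $B$ stays in the region between $P$ and $Q$; $\mathcal{P}(M[P,Q])=\mathrm{conv}\{\sum_{b\in B}e_b: B\text{ a basis}\}\subseteq\mathbb{R}^{m+r}$. A border strip is a connected nonempty skew shape containing no $2\times 2$ square. An outside corner of $[P,Q]$ is a lattice point which is a corner $NE$ (North step followed by East step) on $P$ or a corner $EN$ (East step followed by North step) on $Q$.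
   Formalization: The paths P and Q are also required to meet only at (0,0) and (m,r): after each k-th step with 0 < k < m+r, P lies strictly below Q. The paper assumes this as well. *)

theory Defs
  imports "HOL-Analysis.Analysis"
begin

text \<open>Lattice paths are encoded as bool lists: True = North step N=(0,1),
  False = East step E=(1,0). Steps are numbered 1,...,length from the start.\<close>

definition lattice_path :: "nat \<Rightarrow> nat \<Rightarrow> bool list \<Rightarrow> bool" where
  "lattice_path m r P \<longleftrightarrow> length P = m + r \<and> length (filter id P) = r"

definition ht :: "bool list \<Rightarrow> nat \<Rightarrow> nat" where
  "ht P k = length (filter id (take k P))"

definition pt :: "bool list \<Rightarrow> nat \<Rightarrow> nat \<times> nat" where
  "pt P k = (k - ht P k, ht P k)"

definition never_above :: "bool list \<Rightarrow> bool list \<Rightarrow> bool" where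
  "never_above P Q \<longleftrightarrow> (\<forall>k \<le> length P. ht P k \<le> ht Q k)"

definition stays_between :: "bool list \<Rightarrow> bool list \<Rightarrow> bool list \<Rightarrow> bool" where
  "stays_between P Q R \<longleftrightarrow> (\<forall>k \<le> length R. ht P k \<le> ht R k \<and> ht R k \<le> ht Q k)"

definition path_of :: "nat \<Rightarrow> nat set \<Rightarrow> bool list" where
  "path_of n B = map (\<lambda>i. i \<in> B) [1..<n+1]"

definition lpm_bases :: "nat \<Rightarrow> nat \<Rightarrow> bool list \<Rightarrow> bool list \<Rightarrow> nat set set" where
  "lpm_bases m r P Q = {B. B \<subseteq> {1..m+r} \<and> card B = r \<and> stays_between P Q (path_of (m+r) B)}"

text \<open>Matroid base polytope, with coordinates of R^{m+r} indexed via a bijection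
  coord from {1..m+r} onto the finite index type 'n.\<close>
definition lpm_polytope :: "nat \<Rightarrow> nat \<Rightarrow> bool list \<Rightarrow> bool list \<Rightarrow> (nat \<Rightarrow> 'n::finite) \<Rightarrow> (real ^ 'n) set" where
  "lpm_polytope m r P Q coord =
     convex hull ((\<lambda>B. \<Sum>b\<in>B. axis (coord b) 1) ` lpm_bases m r P Q)"

text \<open>Heights of the East steps: the i-th entry (0-based) is the y-coordinate of
  the East step going from x = i to x = i+1.\<close>
fun east_heights :: "bool list \<Rightarrow> nat \<Rightarrow> nat list" where
  "east_heights [] h = []"
| "east_heights (True # xs) h = east_heights xs (Suc h)"
| "east_heights (False # xs) h = h # east_heights xs h"

text \<open>Unit cells [i,i+1] x [j,j+1] of the region bounded by P (below) and Q (above).\<close>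
definition region_cells :: "nat \<Rightarrow> bool list \<Rightarrow> bool list \<Rightarrow> (nat \<times> nat) set" where
  "region_cells m P Q = {(i, j). i < m \<and> east_heights P 0 ! i \<le> j \<and> j < east_heights Q 0 ! i}"

definition cell_adj :: "(nat \<times> nat) set \<Rightarrow> ((nat \<times> nat) \<times> (nat \<times> nat)) set" where
  "cell_adj S = {((i, j), (i', j')). (i, j) \<in> S \<and> (i', j') \<in> S \<and>
      ((i' = Suc i \<or> i = Suc i') \<and> j = j' \<or> (j' = Suc j \<or> j = Suc j') \<and> i = i')}"

definition border_strip :: "(nat \<times> nat) set \<Rightarrow> bool" where
  "border_strip S \<longleftrightarrow> finite S \<and> S \<noteq> {} \<and>
     (\<forall>a\<in>S. \<forall>b\<in>S. (a, b) \<in> (cell_adj S)\<^sup>*) \<and>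
     \<not> (\<exists>i j. (i, j) \<in> S \<and> (Suc i, j) \<in> S \<and> (i, Suc j) \<in> S \<and> (Suc i, Suc j) \<in> S)"

text \<open>Outside corners: NE corners of P and EN corners of Q (as lattice points).\<close>
definition outside_corners :: "bool list \<Rightarrow> bool list \<Rightarrow> (nat \<times> nat) set" where
  "outside_corners P Q =
     {pt P k | k. 0 < k \<and> k < length P \<and> P ! (k - 1) \<and> \<not> P ! k} \<union>
     {pt Q k | k. 0 < k \<and> k < length Q \<and> \<not> Q ! (k - 1) \<and> Q ! k}"

end

theory Submission
  imports Defs
begin

locale snake =
  fixes n :: nat and p :: "nat \<Rightarrow> bool" and h :: "nat \<Rightarrow> nat" and coord :: "nat \<Rightarrow> 'n::finite"
  assumes n2: "2 \<le> n" and p1: "\<not> p 1" and pn: "p n"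
    and h0: "h 0 = 0" and hS: "\<And>k. k < n \<Longrightarrow> h (Suc k) = h k + (if p (Suc k) then 1 else 0)"
    and bij: "bij_betw coord {1..n} (UNIV :: 'n set)"
begin

definition e :: "nat \<Rightarrow> real^'n" where "e k = axis (coord k) 1"
definition X :: "real^'n \<Rightarrow> nat \<Rightarrow> real" where "X x k = x $ coord k"
definition S :: "real^'n \<Rightarrow> nat \<Rightarrow> real" where "S x k = (\<Sum>i=1..k. X x i)"
definition s :: "real^'n \<Rightarrow> nat \<Rightarrow> real" where "s x k = S x k - real (h k)"
definition pr :: "nat \<Rightarrow> real" where "pr k = (if p k then 1 else 0)"
definition xs :: "(nat \<Rightarrow> real) \<Rightarrow> real^'n" where
  "xs t = (\<Sum>k=1..n. (t k - t (k-1) + pr k) *\<^sub>R e k)"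

lemma inj: "inj_on coord {1..n}" using bij by (simp add: bij_betw_def)

lemma surj: "\<exists>k\<in>{1..n}. j = coord k"
  using bij unfolding bij_betw_def by auto

lemma X_e: "i \<in> {1..n} \<Longrightarrow> k \<in> {1..n} \<Longrightarrow> X (e i) k = (if i = k then 1 else 0)"
  using inj unfolding X_def e_def axis_def by (auto dest: inj_onD)

lemma inner_e: "e k \<bullet> x = X x k"
  by (simp add: e_def X_def inner_axis')

lemma inner_sum_e: "(\<Sum>i\<in>A. e i) \<bullet> x = (\<Sum>i\<in>A. X x i)"
  by (simp add: inner_sum_left inner_e)

lemma X_add: "X (x + y) k = X x k + X y k" by (simp add: X_def)
lemma X_scale: "X (c *\<^sub>R x) k = c * X x k" by (simp add: X_def)
lemma X_sum: "X (\<Sum>i\<in>A. f i) k = (\<Sum>i\<in>A. X (f i) k)"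
  unfolding X_def by (induction A rule: infinite_finite_induct) auto
lemma X_diff: "X (x - y) k = X x k - X y k" by (simp add: X_def)
lemma X_minus: "X (- x) k = - X x k" by (simp add: X_def)

lemma X_xs: "k \<in> {1..n} \<Longrightarrow> X (xs t) k = t k - t (k-1) + pr k"
proof -
  assume k: "k \<in> {1..n}"
  have "X (xs t) k = (\<Sum>i=1..n. (t i - t (i-1) + pr i) * X (e i) k)"
    by (simp add: xs_def X_sum X_scale)
  also have "\<dots> = (\<Sum>i=1..n. if i = k then t i - t (i-1) + pr i else 0)"
  proof (rule sum.cong)
    fix i assume "i \<in> {1..n}"
    then show "(t i - t (i-1) + pr i) * X (e i) k = (if i = k then t i - t (i-1) + pr i else 0)"
      using X_e[OF _ k, of i] by simp
  qed simp
  also have "\<dots> = t k - t (k-1) + pr k" using k by simp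
  finally show ?thesis .
qed

lemma h_le: "k \<le> n \<Longrightarrow> h k \<le> k"
  by (induction k) (auto simp: h0 hS)

lemma S_xs: "k \<le> n \<Longrightarrow> S (xs t) k = t k - t 0 + real (h k)"
proof (induction k)
  case 0 then show ?case by (simp add: S_def h0)
next
  case (Suc k)
  then have "S (xs t) (Suc k) = S (xs t) k + X (xs t) (Suc k)" by (simp add: S_def)
  also have "\<dots> = t (Suc k) - t 0 + real (h (Suc k))"
    using Suc by (simp add: X_xs hS pr_def)
  finally show ?case .
qed

lemma s_xs: "k \<le> n \<Longrightarrow> t 0 = 0 \<Longrightarrow> s (xs t) k = t k"
  by (simp add: s_def S_xs)

lemma X_s: "k \<in> {1..n} \<Longrightarrow> X x k = s x k - s x (k-1) + pr k"
proof -
  assume k: "k \<in> {1..n}"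
  then obtain j where j: "k = Suc j" "j < n" by (cases k) auto
  show ?thesis using j hS[of j] by (simp add: s_def S_def pr_def)
qed

lemma s0: "s x 0 = 0" by (simp add: s_def S_def h0)

lemma vec_eqI: "(\<And>k. k \<in> {1..n} \<Longrightarrow> X x k = X y k) \<Longrightarrow> x = y"
  unfolding vec_eq_iff X_def using surj by metis

lemma xs_s: "xs (s x) = x"
proof (rule vec_eqI)
  fix k assume k: "k \<in> {1..n}"
  show "X (xs (s x)) k = X x k" unfolding X_xs[OF k] X_s[OF k, of x] ..
qed

definition rel :: "nat \<Rightarrow> (nat \<Rightarrow> real) \<Rightarrow> bool" where
  "rel k t \<longleftrightarrow> (if p k then t k \<le> t (k-1) else t (k-1) \<le> t k)"
definition mn :: "nat \<Rightarrow> bool" where "mn k \<longleftrightarrow> (k = 1 \<or> p k) \<and> (k = n-1 \<or> \<not> p (Suc k))"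
definition mx :: "nat \<Rightarrow> bool" where "mx k \<longleftrightarrow> \<not> p k \<and> p (Suc k)"
definition good :: "(nat \<Rightarrow> real) \<Rightarrow> bool" where
  "good t \<longleftrightarrow> t 0 = 0 \<and> t n = 0 \<and> (\<forall>k\<in>{2..n-1}. rel k t) \<and>
     (\<forall>k\<in>{1..n-1}. mn k \<longrightarrow> 0 \<le> t k) \<and> (\<forall>k\<in>{1..n-1}. mx k \<longrightarrow> t k \<le> 1)"

lemma good_lower:
  assumes g: "good t" shows "k \<in> {1..n-1} \<Longrightarrow> 0 \<le> t k"
proof -
  have A: "\<And>k. n - 1 - k = d \<Longrightarrow> k \<in> {1..n-1} \<Longrightarrow> (k = 1 \<or> p k) \<Longrightarrow> 0 \<le> t k" for d
  proof (induction d)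
    case 0
    then have "mn k" by (auto simp: mn_def)
    then show ?case using g 0 by (auto simp: good_def)
  next
    case (Suc d)
    show ?case
    proof (cases "mn k")
      case True then show ?thesis using g Suc by (auto simp: good_def)
    next
      case False
      then have pk: "p (Suc k)" "k \<noteq> n - 1" using Suc.prems by (auto simp: mn_def)
      then have "Suc k \<in> {2..n-1}" using Suc.prems by auto
      then have "rel (Suc k) t" using g by (auto simp: good_def)
      then have "t (Suc k) \<le> t k" using pk by (simp add: rel_def)
      moreover have "0 \<le> t (Suc k)" using Suc.IH[of "Suc k"] Suc.prems pk by auto
      ultimately show ?thesis by linarith
    qed
  qed
  show "k \<in> {1..n-1} \<Longrightarrow> 0 \<le> t k"
  proof (induction k)
    case 0 then show ?case by simp
  next
    case (Suc k)
    show ?case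
    proof (cases "Suc k = 1 \<or> p (Suc k)")
      case True then show ?thesis using A Suc.prems by blast
    next
      case False
      then have "Suc k \<in> {2..n-1}" "k \<in> {1..n-1}" using Suc.prems by auto
      then have "rel (Suc k) t" using g by (auto simp: good_def)
      then have "t k \<le> t (Suc k)" using False by (simp add: rel_def)
      then show ?thesis using Suc.IH \<open>k \<in> {1..n-1}\<close> by linarith
    qed
  qed
qed

lemma good_upper:
  assumes g: "good t" shows "k \<in> {1..n-1} \<Longrightarrow> t k \<le> 1"
proof -
  have A: "\<And>k. n - 1 - k = d \<Longrightarrow> k \<in> {1..n-1} \<Longrightarrow> \<not> p k \<Longrightarrow> t k \<le> 1" for d
  proof (induction d)
    case 0
    then have "k = n - 1" by auto
    then have "Suc k = n" using n2 by auto
    then have "mx k" using 0 pn by (auto simp: mx_def)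
    then show ?case using g 0 by (auto simp: good_def)
  next
    case (Suc d)
    show ?case
    proof (cases "mx k")
      case True then show ?thesis using g Suc by (auto simp: good_def)
    next
      case False
      then have pk: "\<not> p (Suc k)" using Suc.prems by (auto simp: mx_def)
      then have "Suc k \<noteq> n" using pn by auto
      then have "Suc k \<in> {2..n-1}" using Suc.prems by auto
      then have "rel (Suc k) t" using g by (auto simp: good_def)
      then have "t k \<le> t (Suc k)" using pk by (simp add: rel_def)
      moreover have "t (Suc k) \<le> 1" using Suc.IH[of "Suc k"] Suc.prems pk \<open>Suc k \<in> {2..n-1}\<close> by auto
      ultimately show ?thesis by linarith
    qed
  qed
  show "k \<in> {1..n-1} \<Longrightarrow> t k \<le> 1"
  proof (induction k)
    case 0 then show ?case by simp
  next
    case (Suc k)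
    show ?case
    proof (cases "p (Suc k)")
      case False then show ?thesis using A Suc.prems by blast
    next
      case True
      then have "k \<noteq> 0" using p1 by (cases k) auto
      then have "Suc k \<in> {2..n-1}" "k \<in> {1..n-1}" using Suc.prems by auto
      then have "rel (Suc k) t" using g by (auto simp: good_def)
      then have "t (Suc k) \<le> t k" using True by (simp add: rel_def)
      then show ?thesis using Suc.IH \<open>k \<in> {1..n-1}\<close> by linarith
    qed
  qed
qed

lemma good_rel:
  assumes g: "good t" and k: "k \<in> {1..n}" shows "rel k t"
proof -
  have "1 \<in> {1..n-1}" "n - 1 \<in> {1..n-1}" using n2 by auto
  then have "0 \<le> t 1" "0 \<le> t (n-1)" using good_lower[OF g] by auto
  moreover have "t 0 = 0" "t n = 0" using g by (auto simp: good_def)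
  moreover have "k \<noteq> 1 \<Longrightarrow> k \<noteq> n \<Longrightarrow> rel k t" using g k by (auto simp: good_def)
  ultimately show ?thesis using p1 pn
    by (cases "k = 1"; cases "k = n") (auto simp: rel_def)
qed

definition I :: "(nat \<times> nat) set" where
  "I = Pair 0 ` {2..n-1} \<union> Pair 1 ` {k\<in>{1..n-1}. mn k} \<union> Pair 2 ` {k\<in>{1..n-1}. mx k}"

definition av :: "nat \<times> nat \<Rightarrow> real^'n" where
  "av c = (if fst c = 0 then (if p (snd c) then e (snd c) else - e (snd c))
           else if fst c = 1 then - (\<Sum>i=1..snd c. e i) else (\<Sum>i=1..snd c. e i))"
definition bv :: "nat \<times> nat \<Rightarrow> real" where
  "bv c = (if fst c = 0 then (if p (snd c) then 1 else 0)
           else if fst c = 1 then - real (h (snd c)) else real (h (snd c)) + 1)"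
definition sats :: "nat \<times> nat \<Rightarrow> (nat \<Rightarrow> real) \<Rightarrow> bool" where
  "sats c t \<longleftrightarrow> (if fst c = 0 then rel (snd c) t else if fst c = 1 then 0 \<le> t (snd c) else t (snd c) \<le> 1)"
definition tights :: "nat \<times> nat \<Rightarrow> (nat \<Rightarrow> real) \<Rightarrow> bool" where
  "tights c t \<longleftrightarrow> (if fst c = 0 then t (snd c) = t (snd c - 1)
      else if fst c = 1 then t (snd c) = 0 else t (snd c) = 1)"
definition hs :: "nat \<times> nat \<Rightarrow> (real^'n) set" where
  "hs c = {x. av c \<bullet> x \<le> bv c}"

lemma I_range: "c \<in> I \<Longrightarrow> snd c \<in> {1..n}"
  by (auto simp: I_def)

lemma av_inner: "c \<in> I \<Longrightarrow> av c \<bullet> x = (if fst c = 0 then (if p (snd c) then X x (snd c) else - X x (snd c))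
     else if fst c = 1 then - S x (snd c) else S x (snd c))"
  by (auto simp: av_def inner_e inner_sum_e S_def)

lemma sat_iff: assumes c: "c \<in> I" shows "av c \<bullet> x \<le> bv c \<longleftrightarrow> sats c (s x)"
  using X_s[OF I_range[OF c], of x] av_inner[OF c, of x]
  by (auto simp: bv_def sats_def rel_def s_def pr_def)

lemma tight_iff: assumes c: "c \<in> I" shows "av c \<bullet> x = bv c \<longleftrightarrow> tights c (s x)"
  using X_s[OF I_range[OF c], of x] av_inner[OF c, of x]
  by (auto simp: bv_def tights_def s_def pr_def)

definition H :: "(real^'n) set" where
  "H = {x. S x n = real (h n)} \<inter> (\<Inter>c\<in>I. hs c)"

lemma good_iff_all: "good t \<longleftrightarrow> t 0 = 0 \<and> t n = 0 \<and> (\<forall>c\<in>I. sats c t)"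
proof
  assume "good t" then show "t 0 = 0 \<and> t n = 0 \<and> (\<forall>c\<in>I. sats c t)"
    by (auto simp: good_def I_def sats_def)
next
  assume a: "t 0 = 0 \<and> t n = 0 \<and> (\<forall>c\<in>I. sats c t)"
  have "\<forall>k\<in>{2..n-1}. rel k t"
  proof
    fix k assume "k \<in> {2..n-1}" then have "(0,k) \<in> I" by (auto simp: I_def)
    then show "rel k t" using a by (auto simp: sats_def)
  qed
  moreover have "\<forall>k\<in>{1..n-1}. mn k \<longrightarrow> 0 \<le> t k"
  proof (intro ballI impI)
    fix k assume "k \<in> {1..n-1}" "mn k" then have "(1,k) \<in> I" by (auto simp: I_def)
    then show "0 \<le> t k" using a by (auto simp: sats_def)
  qed
  moreover have "\<forall>k\<in>{1..n-1}. mx k \<longrightarrow> t k \<le> 1"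
  proof (intro ballI impI)
    fix k assume "k \<in> {1..n-1}" "mx k" then have "(2,k) \<in> I" by (auto simp: I_def)
    then show "t k \<le> 1" using a by (auto simp: sats_def)
  qed
  ultimately show "good t" using a by (auto simp: good_def)
qed

lemma H_iff: "x \<in> H \<longleftrightarrow> good (s x)"
  by (auto simp: H_def good_iff_all hs_def sat_iff s0 s_def h0 S_def)

definition BS :: "nat set set" where
  "BS = {B. B \<subseteq> {1..n} \<and> card B = h n \<and>
     (\<forall>k\<in>{1..n-1}. h k \<le> card (B \<inter> {1..k}) \<and> card (B \<inter> {1..k}) \<le> h k + 1)}"
definition vB :: "nat set \<Rightarrow> real^'n" where "vB B = (\<Sum>b\<in>B. e b)"
definition V :: "(real^'n) set" where "V = vB ` BS"

lemma X_vB: assumes B: "B \<subseteq> {1..n}" and k: "k \<in> {1..n}"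
  shows "X (vB B) k = (if k \<in> B then 1 else 0)"
proof -
  have fin: "finite B" using B finite_subset by blast
  have "X (vB B) k = (\<Sum>b\<in>B. X (e b) k)" by (simp add: vB_def X_sum)
  also have "\<dots> = (\<Sum>b\<in>B. if b = k then 1 else 0)"
    by (rule sum.cong) (use B k X_e in auto)
  also have "\<dots> = (if k \<in> B then 1 else 0)" using fin by simp
  finally show ?thesis .
qed

lemma S_vB: assumes B: "B \<subseteq> {1..n}" and k: "k \<le> n"
  shows "S (vB B) k = real (card (B \<inter> {1..k}))"
proof -
  have "S (vB B) k = (\<Sum>i=1..k. if i \<in> B then 1 else 0)"
    unfolding S_def by (rule sum.cong) (use B k X_vB in auto)
  also have "\<dots> = (\<Sum>i\<in>{1..k} \<inter> B. 1)" by (rule sum.inter_restrict[symmetric]) simp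
  also have "\<dots> = real (card (B \<inter> {1..k}))" by (simp add: Int_commute)
  finally show ?thesis .
qed

lemma V_sub_H: "V \<subseteq> H"
proof
  fix x assume "x \<in> V"
  then obtain B where B: "B \<in> BS" and x: "x = vB B" by (auto simp: V_def)
  have Bs: "B \<subseteq> {1..n}" using B by (auto simp: BS_def)
  have Bn: "B \<inter> {1..n} = B" using Bs by auto
  have sx: "k \<le> n \<Longrightarrow> s x k = real (card (B \<inter> {1..k})) - real (h k)" for k
    using S_vB[OF Bs] by (simp add: s_def x)
  have "good (s x)" unfolding good_def
  proof (intro conjI ballI impI)
    show "s x 0 = 0" by (rule s0)
    show "s x n = 0" using sx[of n] B Bn by (simp add: BS_def)
  next
    fix k assume k: "k \<in> {2..n-1}"
    then have k1: "k \<in> {1..n}" by auto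
    have "X x k \<in> {0,1}" using X_vB[OF Bs k1] x by auto
    then show "rel k (s x)" using X_s[OF k1, of x] by (auto simp: rel_def pr_def split: if_splits)
  next
    fix k assume k: "k \<in> {1..n-1}"
    then have c: "h k \<le> card (B \<inter> {1..k})" "card (B \<inter> {1..k}) \<le> h k + 1" using B by (auto simp: BS_def)
    then have "real (h k) \<le> real (card (B \<inter> {1..k}))" "real (card (B \<inter> {1..k})) \<le> real (h k + 1)"
      by (simp_all only: of_nat_le_iff)
    then show "0 \<le> s x k" "s x k \<le> 1" using sx[of k] k by auto
  qed
  then show "x \<in> H" by (simp add: H_iff)
qed

lemma int_in_V:
  assumes g: "good (s x)" and i: "\<And>k. k \<le> n \<Longrightarrow> s x k = 0 \<or> s x k = 1"
  shows "x \<in> V"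
proof -
  have X01: "X x k = 0 \<or> X x k = 1" if k: "k \<in> {1..n}" for k
  proof -
    have "rel k (s x)" using good_rel[OF g k] .
    moreover have "s x k = 0 \<or> s x k = 1" "s x (k-1) = 0 \<or> s x (k-1) = 1" using i[of k] i[of "k-1"] k by auto
    ultimately show ?thesis using X_s[OF k, of x] by (auto simp: rel_def pr_def split: if_splits)
  qed
  define B where "B = {k\<in>{1..n}. X x k = 1}"
  have Bs: "B \<subseteq> {1..n}" by (auto simp: B_def)
  have xB: "x = vB B"
  proof (rule vec_eqI)
    fix k assume k: "k \<in> {1..n}"
    show "X x k = X (vB B) k" using X_vB[OF Bs k] X01[OF k] k unfolding B_def by auto
  qed
  have Sk: "k \<le> n \<Longrightarrow> real (card (B \<inter> {1..k})) = real (h k) + s x k" for k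
    using S_vB[OF Bs, of k] xB by (simp add: s_def)
  have "card B = h n"
  proof -
    have "B \<inter> {1..n} = B" using Bs by auto
    then have "real (card B) = real (h n)" using Sk[of n] g by (simp add: good_def)
    then show ?thesis by simp
  qed
  moreover have "\<forall>k\<in>{1..n-1}. h k \<le> card (B \<inter> {1..k}) \<and> card (B \<inter> {1..k}) \<le> h k + 1"
  proof
    fix k assume k: "k \<in> {1..n-1}"
    then have "real (card (B \<inter> {1..k})) = real (h k) + s x k" using Sk by auto
    moreover have "s x k = 0 \<or> s x k = 1" using i[of k] k by auto
    ultimately show "h k \<le> card (B \<inter> {1..k}) \<and> card (B \<inter> {1..k}) \<le> h k + 1" by auto
  qed
  ultimately have "B \<in> BS" using Bs by (simp add: BS_def)
  then show ?thesis using xB by (simp add: V_def)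
qed

lemma good_cong:
  assumes eq: "\<And>k. k \<le> n \<Longrightarrow> t1 k = t2 k" shows "good t1 \<longleftrightarrow> good t2"
proof -
  have r: "k \<in> {2..n-1} \<Longrightarrow> rel k t1 = rel k t2" for k using eq[of k] eq[of "k-1"] by (auto simp: rel_def)
  have A: "(\<forall>k\<in>{2..n-1}. rel k t1) = (\<forall>k\<in>{2..n-1}. rel k t2)" using r by blast
  have eq': "\<And>k. 1 \<le> k \<Longrightarrow> k \<le> n - 1 \<Longrightarrow> t1 k = t2 k" using eq by auto
  have B: "(\<forall>k\<in>{1..n-1}. mn k \<longrightarrow> 0 \<le> t1 k) = (\<forall>k\<in>{1..n-1}. mn k \<longrightarrow> 0 \<le> t2 k)" using eq' by auto
  have C: "(\<forall>k\<in>{1..n-1}. mx k \<longrightarrow> t1 k \<le> 1) = (\<forall>k\<in>{1..n-1}. mx k \<longrightarrow> t2 k \<le> 1)" using eq' by auto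
  show ?thesis unfolding good_def A B C using eq[of 0] eq[of n] by simp
qed

lemma good_xs: "good t \<Longrightarrow> xs t \<in> H"
proof -
  assume g: "good t"
  have "s (xs t) k = t k" if "k \<le> n" for k using s_xs[OF that] g by (simp add: good_def)
  then have "good (s (xs t)) = good t" by (rule good_cong)
  then show ?thesis using g by (simp add: H_iff)
qed

lemma H_bounded_coord: "x \<in> H \<Longrightarrow> \<bar>x $ j\<bar> \<le> 1"
proof -
  assume "x \<in> H"
  then have g: "good (s x)" by (simp add: H_iff)
  obtain k where k: "k \<in> {1..n}" "j = coord k" using surj by blast
  have r: "rel k (s x)" using good_rel[OF g k(1)] .
  have b1: "k \<in> {1..n-1} \<Longrightarrow> 0 \<le> s x k \<and> s x k \<le> 1" using good_lower[OF g] good_upper[OF g] by auto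
  have b2: "k - 1 \<in> {1..n-1} \<Longrightarrow> 0 \<le> s x (k-1) \<and> s x (k-1) \<le> 1" using good_lower[OF g] good_upper[OF g] by auto
  have e0: "s x 0 = 0" "s x n = 0" using g by (auto simp: good_def)
  have "0 \<le> X x k \<and> X x k \<le> 1"
  proof (cases "k = n")
    case True
    then have "k - 1 \<in> {1..n-1}" using n2 by auto
    then show ?thesis using b2 r e0 True pn X_s[OF k(1), of x] by (auto simp: rel_def pr_def)
  next
    case False
    then have kk: "k \<in> {1..n-1}" using k by auto
    show ?thesis
    proof (cases "k = 1")
      case True
      then show ?thesis using b1 kk r e0 p1 X_s[OF k(1), of x] by (auto simp: rel_def pr_def)
    next
      case False
      then have "k - 1 \<in> {1..n-1}" using kk by auto
      then show ?thesis using b1 b2 kk r X_s[OF k(1), of x] by (auto simp: rel_def pr_def split: if_splits)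
    qed
  qed
  then show ?thesis using k by (simp add: X_def)
qed

lemma H_compact: "compact H"
proof -
  have "closed H"
  proof -
    have "{x. S x n = real (h n)} = {x. (\<Sum>i=1..n. e i) \<bullet> x = real (h n)}"
      by (simp add: inner_sum_e S_def)
    then have "closed {x. S x n = real (h n)}" by (simp add: closed_hyperplane)
    moreover have "closed (\<Inter>c\<in>I. hs c)" by (auto simp: hs_def intro!: closed_INT closed_halfspace_le)
    ultimately show ?thesis by (simp add: H_def closed_Int)
  qed
  moreover have "bounded H"
  proof -
    have "norm x \<le> real CARD('n)" if "x \<in> H" for x
    proof -
      have "norm x \<le> (\<Sum>i\<in>UNIV. \<bar>x $ i\<bar>)" by (rule norm_le_l1_cart)
      also have "\<dots> \<le> (\<Sum>i\<in>(UNIV::'n set). 1)" by (rule sum_mono) (use H_bounded_coord that in auto)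
      finally show ?thesis by simp
    qed
    then show ?thesis by (auto simp: bounded_iff)
  qed
  ultimately show ?thesis by (simp add: compact_eq_bounded_closed)
qed

lemma H_convex: "convex H"
proof -
  have "{x. S x n = real (h n)} = {x. (\<Sum>i=1..n. e i) \<bullet> x = real (h n)}"
    by (simp add: inner_sum_e S_def)
  then have "convex {x. S x n = real (h n)}" by (simp add: convex_hyperplane)
  moreover have "convex (\<Inter>c\<in>I. hs c)" by (auto simp: hs_def intro!: convex_INT convex_halfspace_le)
  ultimately show ?thesis by (simp add: H_def convex_Int)
qed

lemma good_map:
  assumes g: "good t" and tV: "\<And>k. k \<le> n \<Longrightarrow> t k \<in> Vals" and V0: "0 \<in> Vals" and V1: "1 \<in> Vals"
    and mono: "\<And>u w. u \<in> Vals \<Longrightarrow> w \<in> Vals \<Longrightarrow> u \<le> w \<Longrightarrow> f u \<le> f w"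
    and f0: "f 0 = 0" and f1: "f 1 = 1"
  shows "good (\<lambda>k. f (t k))"
  unfolding good_def
proof (intro conjI ballI impI)
  show "f (t 0) = 0" "f (t n) = 0" using g f0 by (auto simp: good_def)
next
  fix k assume k: "k \<in> {2..n-1}"
  then have "rel k t" using g by (auto simp: good_def)
  moreover have "t k \<in> Vals" "t (k-1) \<in> Vals" using tV k by auto
  ultimately show "rel k (\<lambda>k. f (t k))" using mono by (auto simp: rel_def split: if_splits)
next
  fix k assume k: "k \<in> {1..n-1}"
  then have tk: "t k \<in> Vals" using tV by auto
  { assume "mn k" then have "0 \<le> t k" using g k by (auto simp: good_def)
    then show "0 \<le> f (t k)" using mono[OF V0 tk] f0 by simp }
  { assume "mx k" then have "t k \<le> 1" using g k by (auto simp: good_def)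
    then show "f (t k) \<le> 1" using mono[OF tk V1] f1 by simp }
qed

lemma X_midpoint: "X (midpoint y z) k = (X y k + X z k) / 2"
  by (simp add: midpoint_def X_def)

lemma extreme_int:
  assumes ex: "x extreme_point_of H" and k: "k \<le> n"
  shows "s x k = 0 \<or> s x k = 1"
proof (rule ccontr)
  assume nk: "\<not> (s x k = 0 \<or> s x k = 1)"
  have xH: "x \<in> H" using ex by (simp add: extreme_point_of_def)
  then have g: "good (s x)" by (simp add: H_iff)
  have "k \<noteq> 0" using nk s0[of x] by metis
  moreover have "k \<noteq> n" using nk g unfolding good_def by metis
  ultimately have k1: "k \<in> {1..n-1}" using k by auto
  define c where "c = s x k"
  have c01: "0 < c" "c < 1" using good_lower[OF g k1] good_upper[OF g k1] nk by (auto simp: c_def)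
  define Vals where "Vals = (s x) ` {0..n} \<union> {0,1}"
  define D where "D = (\<lambda>v. \<bar>v - c\<bar>) ` (Vals - {c})"
  have finD: "finite D" "D \<noteq> {}" using c01 by (auto simp: D_def Vals_def)
  define \<epsilon> where "\<epsilon> = Min D"
  have epos: "0 < \<epsilon>" unfolding \<epsilon>_def using finD by (auto simp: D_def)
  have ele: "v \<in> Vals \<Longrightarrow> v \<noteq> c \<Longrightarrow> \<epsilon> \<le> \<bar>v - c\<bar>" for v
    unfolding \<epsilon>_def using finD by (auto simp: D_def intro!: Min_le)
  define f where "f = (\<lambda>\<delta> v. if v = c then v + \<delta> else (v::real))"
  have mono: "f \<delta> u \<le> f \<delta> w" if "\<bar>\<delta>\<bar> \<le> \<epsilon>" "u \<in> Vals" "w \<in> Vals" "u \<le> w" for \<delta> u w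
  proof (cases "u = c"; cases "w = c")
    assume "u = c" "w \<noteq> c" then show ?thesis using ele[of w] that by (auto simp: f_def)
  next
    assume "u \<noteq> c" "w = c" then show ?thesis using ele[of u] that by (auto simp: f_def)
  qed (auto simp: f_def that)
  have f01: "f \<delta> 0 = 0" "f \<delta> 1 = 1" for \<delta> using c01 by (auto simp: f_def)
  have tV: "j \<le> n \<Longrightarrow> s x j \<in> Vals" for j by (auto simp: Vals_def)
  have V01: "0 \<in> Vals" "1 \<in> Vals" by (auto simp: Vals_def)
  define t1 where "t1 = (\<lambda>j. f \<epsilon> (s x j))"
  define t2 where "t2 = (\<lambda>j. f (-\<epsilon>) (s x j))"
  have g1: "good t1" unfolding t1_def
    by (rule good_map[OF g tV V01]) (use mono epos f01 in auto)
  have g2: "good t2" unfolding t2_def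
    by (rule good_map[OF g tV V01]) (use mono epos f01 in auto)
  define y where "y = xs t1"
  define z where "z = xs t2"
  have yH: "y \<in> H" "z \<in> H" using good_xs g1 g2 by (auto simp: y_def z_def)
  have "s y k = c + \<epsilon>" "s z k = c - \<epsilon>"
    using s_xs[OF k, of t1] s_xs[OF k, of t2] g1 g2 by (auto simp: y_def z_def t1_def t2_def f_def c_def good_def)
  then have yz: "y \<noteq> z" using epos by auto
  have "midpoint y z = x"
  proof (rule vec_eqI)
    fix j assume j: "j \<in> {1..n}"
    have "t1 i + t2 i = 2 * s x i" for i by (simp add: t1_def t2_def f_def)
    then show "X (midpoint y z) j = X x j"
      unfolding X_midpoint y_def z_def X_xs[OF j] X_s[OF j, of x] by (simp add: field_simps)
  qed
  then have "x \<in> open_segment y z" using yz midpoint_in_open_segment by metis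
  then show False using ex yH by (auto simp: extreme_point_of_def)
qed

lemma hull_eq: "convex hull V = H"
proof
  show "convex hull V \<subseteq> H" using V_sub_H H_convex by (simp add: hull_minimal)
next
  have "{x. x extreme_point_of H} \<subseteq> V"
  proof
    fix x assume x: "x \<in> {x. x extreme_point_of H}"
    then have "good (s x)" by (simp add: extreme_point_of_def H_iff)
    then show "x \<in> V" using int_in_V extreme_int x by auto
  qed
  then have "convex hull {x. x extreme_point_of H} \<subseteq> convex hull V" by (rule hull_mono)
  then show "H \<subseteq> convex hull V" using Krein_Milman_Minkowski[OF H_compact H_convex] by simp
qed

definition ind :: "nat \<Rightarrow> nat \<Rightarrow> nat \<Rightarrow> real" where
  "ind a b = (\<lambda>k. if a \<le> k \<and> k \<le> b then 1 else 0)"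

definition vert :: "(nat \<Rightarrow> real) \<Rightarrow> bool" where
  "vert t \<longleftrightarrow> good t \<and> (\<forall>k\<le>n. t k = 0 \<or> t k = 1)"

lemma vert_V: "vert t \<Longrightarrow> xs t \<in> V"
proof -
  assume v: "vert t"
  then have g: "good t" and i: "\<And>k. k \<le> n \<Longrightarrow> t k = 0 \<or> t k = 1" by (auto simp: vert_def)
  have sx: "k \<le> n \<Longrightarrow> s (xs t) k = t k" for k using s_xs g by (auto simp: good_def)
  have "good (s (xs t))" using good_xs[OF g] by (simp add: H_iff)
  then show ?thesis using i sx by (intro int_in_V) auto
qed

lemma ind_vert:
  assumes "1 \<le> a" "b < n" "\<not> p a" "p (Suc b)"
  shows "vert (ind a b)"
proof -
  have "good (ind a b)" unfolding good_def
  proof (intro conjI ballI impI)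
    fix k assume k: "k \<in> {2..n-1}"
    show "rel k (ind a b)"
    proof (cases "ind a b k = ind a b (k-1)")
      case True then show ?thesis by (simp add: rel_def)
    next
      case False
      then have "k = a \<and> a \<le> b \<or> k = Suc b \<and> a \<le> b" using k by (auto simp: ind_def split: if_splits)
      then show ?thesis using assms by (auto simp: rel_def ind_def)
    qed
  qed (use assms in \<open>auto simp: ind_def\<close>)
  then show ?thesis by (auto simp: vert_def ind_def)
qed

lemma zero_vert: "vert (\<lambda>_. 0)"
  by (auto simp: vert_def good_def rel_def)

definition base :: "real^'n" where "base = xs (\<lambda>_. 0)"

lemma base_V: "base \<in> V" using vert_V[OF zero_vert] by (simp add: base_def)

lemma X_xs_base: "k \<in> {1..n} \<Longrightarrow> X (xs t - base) k = t k - t (k-1)"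
  by (simp add: X_diff X_xs base_def)

lemma X_e_diff: "a \<in> {1..n} \<Longrightarrow> b \<in> {1..n} \<Longrightarrow> k \<in> {1..n} \<Longrightarrow>
   X (e a - e b) k = (if k = a then 1 else 0) - (if k = b then 1 else 0)"
  by (simp add: X_diff X_e)

lemma ind_base:
  assumes "1 \<le> a" "a \<le> b" "b < n"
  shows "xs (ind a b) - base = e a - e (Suc b)"
proof (rule vec_eqI)
  fix k assume k: "k \<in> {1..n}"
  have "a \<in> {1..n}" "Suc b \<in> {1..n}" using assms by auto
  then have "X (e a - e (Suc b)) k = (if k = a then 1 else 0) - (if k = Suc b then 1 else 0)"
    using X_e_diff[of a "Suc b" k] k by simp
  then show "X (xs (ind a b) - base) k = X (e a - e (Suc b)) k"
    unfolding X_xs_base[OF k] using assms k by (auto simp: ind_def)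
qed

definition SP :: "(real^'n) set" where
  "SP = span ((\<lambda>x. - base + x) ` (V - {base}))"

lemma V_SP: "v \<in> V \<Longrightarrow> v - base \<in> SP"
proof (cases "v = base")
  case True then show ?thesis by (simp add: SP_def span_zero)
next
  case False
  assume "v \<in> V"
  then have "- base + v \<in> (\<lambda>x. - base + x) ` (V - {base})" using False by auto
  then show ?thesis unfolding SP_def by (metis span_base diff_conv_add_uminus add.commute)
qed

lemma ind_SP: "1 \<le> a \<Longrightarrow> a \<le> b \<Longrightarrow> b < n \<Longrightarrow> \<not> p a \<Longrightarrow> p (Suc b) \<Longrightarrow> e a - e (Suc b) \<in> SP"
  using V_SP[OF vert_V[OF ind_vert]] ind_base by metis

lemma G_SP:
  assumes j: "j \<in> {1..n-1}" shows "e j - e (Suc j) \<in> SP"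
proof (cases "p j"; cases "p (Suc j)")
  assume a: "\<not> p j" "p (Suc j)"
  then show ?thesis using ind_SP[of j j] j by auto
next
  assume a: "\<not> p j" "\<not> p (Suc j)"
  then have "Suc j \<noteq> n" using pn by auto
  then have "e j - e n \<in> SP" "e (Suc j) - e n \<in> SP"
    using ind_SP[of j "n-1"] ind_SP[of "Suc j" "n-1"] j a pn n2 by auto
  then have "(e j - e n) - (e (Suc j) - e n) \<in> SP" unfolding SP_def by (rule span_diff)
  then show ?thesis by simp
next
  assume a: "p j" "p (Suc j)"
  then have "j \<noteq> 1" using p1 by auto
  then have "e 1 - e (Suc j) \<in> SP" "e 1 - e j \<in> SP"
    using ind_SP[of 1 j] ind_SP[of 1 "j-1"] j a p1 by auto
  then have "(e 1 - e (Suc j)) - (e 1 - e j) \<in> SP" unfolding SP_def by (rule span_diff)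
  then show ?thesis by simp
next
  assume a: "p j" "\<not> p (Suc j)"
  then have "j \<noteq> 1" "Suc j \<noteq> n" using p1 pn by auto
  then have f1: "e 1 - e n \<in> SP" and f2: "e 1 - e j \<in> SP" and "e (Suc j) - e n \<in> SP"
    using ind_SP[of 1 "n-1"] ind_SP[of 1 "j-1"] ind_SP[of "Suc j" "n-1"] j a p1 pn n2 by auto
  have "(e 1 - e n) - (e 1 - e j) \<in> SP" using f1 f2 unfolding SP_def by (rule span_diff)
  then have "(e 1 - e n) - (e 1 - e j) - (e (Suc j) - e n) \<in> SP" using \<open>e (Suc j) - e n \<in> SP\<close>
    unfolding SP_def by (rule span_diff)
  then show ?thesis by (simp add: algebra_simps)
qed

lemma xs_aff:
  assumes t0: "t 0 = 0" and tn: "t n = 0"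
  shows "xs t \<in> affine hull V"
proof -
  define Q where "Q k = (\<Sum>i=1..k. (t i - t (i-1)) *\<^sub>R e i)" for k
  have step: "k \<le> n \<Longrightarrow> Q k - t k *\<^sub>R e k \<in> SP" for k
  proof (induction k)
    case 0 then show ?case by (simp add: Q_def t0 SP_def span_zero)
  next
    case (Suc k)
    have q: "Q (Suc k) = Q k + (t (Suc k) - t k) *\<^sub>R e (Suc k)" by (simp add: Q_def)
    have eq: "Q (Suc k) - t (Suc k) *\<^sub>R e (Suc k) = (Q k - t k *\<^sub>R e k) + t k *\<^sub>R (e k - e (Suc k))"
      unfolding q by (simp add: scaleR_diff_left scaleR_diff_right)
    have "t k *\<^sub>R (e k - e (Suc k)) \<in> SP"
    proof (cases "k = 0")
      case True then show ?thesis by (simp add: t0 SP_def span_zero)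
    next
      case False
      then have "k \<in> {1..n-1}" using Suc.prems by auto
      then show ?thesis using G_SP unfolding SP_def by (intro span_mul) auto
    qed
    then show ?case unfolding eq using Suc by (simp add: SP_def span_add)
  qed
  have "xs t - base = Q n"
  proof (rule vec_eqI)
    fix k assume k: "k \<in> {1..n}"
    have "X (Q n) k = (\<Sum>i=1..n. (t i - t (i-1)) * X (e i) k)"
      by (simp add: Q_def X_sum X_scale)
    also have "\<dots> = (\<Sum>i=1..n. if i = k then t i - t (i-1) else 0)"
    proof (rule sum.cong)
      fix i assume "i \<in> {1..n}"
      then show "(t i - t (i-1)) * X (e i) k = (if i = k then t i - t (i-1) else 0)"
        using X_e[OF _ k, of i] by simp
    qed simp
    also have "\<dots> = t k - t (k-1)" using k by simp
    finally show "X (xs t - base) k = X (Q n) k" using X_xs_base[OF k] by simp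
  qed
  then have d: "- base + xs t \<in> SP" using step[of n] tn by simp
  have "affine hull V = (\<lambda>x. base + x) ` SP" unfolding SP_def by (rule affine_hull_span2[OF base_V])
  moreover have "xs t = base + (- base + xs t)" by simp
  ultimately show ?thesis using d by blast
qed

lemma sats_cong: "c \<in> I \<Longrightarrow> (\<And>k. k \<le> n \<Longrightarrow> t1 k = t2 k) \<Longrightarrow> sats c t1 = sats c t2"
  using I_range[of c] by (auto simp: sats_def rel_def)

lemma tights_cong: "c \<in> I \<Longrightarrow> (\<And>k. k \<le> n \<Longrightarrow> t1 k = t2 k) \<Longrightarrow> tights c t1 = tights c t2"
  using I_range[of c] by (auto simp: tights_def)

lemma I_cases:
  assumes "c \<in> I"
  obtains (E) k where "c = (0,k)" "k \<in> {2..n-1}"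
    | (L) k where "c = (1,k)" "k \<in> {1..n-1}" "mn k"
    | (U) k where "c = (2,k)" "k \<in> {1..n-1}" "mx k"
  using assms unfolding I_def by auto

definition wit :: "nat \<times> nat \<Rightarrow> nat \<Rightarrow> real" where
  "wit c = (if fst c = 0 then
      (\<lambda>j. if 1 \<le> j \<and> j < snd c then (if p (snd c) then 1/3 else 2/3)
           else if snd c \<le> j \<and> j \<le> n - 1 then (if p (snd c) then 2/3 else 1/3) else 0)
     else if fst c = 1 then (\<lambda>j. if j = snd c then -1/3 else if 1 \<le> j \<and> j \<le> n-1 then 1/2 else 0)
     else (\<lambda>j. if j = snd c then 4/3 else if 1 \<le> j \<and> j \<le> n-1 then 1/2 else 0))"

lemma wit_0: "c \<in> I \<Longrightarrow> wit c 0 = 0 \<and> wit c n = 0"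
  by (erule I_cases) (auto simp: wit_def)

lemma wit_not: "c \<in> I \<Longrightarrow> \<not> sats c (wit c)"
  by (erule I_cases) (auto simp: wit_def sats_def rel_def)

lemma wit_other: assumes c: "c \<in> I" and c': "c' \<in> I" and ne: "c' \<noteq> c"
  shows "sats c' (wit c)"
  using c
proof (cases rule: I_cases)
  case (E k)
  note ck = this
  from c' show ?thesis
  proof (cases rule: I_cases)
    case (E j)
    then have "j \<noteq> k" using ne ck by auto
    then show ?thesis using E ck by (auto simp: wit_def sats_def rel_def)
  qed (use ck in \<open>auto simp: wit_def sats_def\<close>)
next
  case (L k)
  note ck = this
  from c' show ?thesis
  proof (cases rule: I_cases)
    case (E j)
    have h1: "j = k \<Longrightarrow> p k" using ck E by (auto simp: mn_def)
    have h2: "j = Suc k \<Longrightarrow> \<not> p j" using ck E by (auto simp: mn_def)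
    show ?thesis using E ck h1 h2 by (auto simp: wit_def sats_def rel_def)
  next
    case (L j)
    then show ?thesis using ck ne by (auto simp: wit_def sats_def)
  qed (use ck in \<open>auto simp: wit_def sats_def\<close>)
next
  case (U k)
  note ck = this
  from c' show ?thesis
  proof (cases rule: I_cases)
    case (E j)
    have h1: "j = k \<Longrightarrow> \<not> p k" using ck E by (auto simp: mx_def)
    have h2: "j = Suc k \<Longrightarrow> p j" using ck E by (auto simp: mx_def)
    show ?thesis using E ck h1 h2 by (auto simp: wit_def sats_def rel_def)
  next
    case (U j)
    then show ?thesis using ck ne by (auto simp: wit_def sats_def)
  qed (use ck in \<open>auto simp: wit_def sats_def\<close>)
qed

lemma I_fst: "c \<in> I \<Longrightarrow> fst c = 0 \<or> fst c = 1 \<or> fst c = 2"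
  by (auto simp: I_def)
lemma I_0: "c \<in> I \<Longrightarrow> fst c = 0 \<Longrightarrow> \<exists>j. c = (0,j) \<and> j \<in> {2..n-1}"
  by (auto simp: I_def)
lemma I_1: "c \<in> I \<Longrightarrow> fst c = 1 \<Longrightarrow> \<exists>j. c = (1,j) \<and> j \<in> {1..n-1} \<and> mn j"
  by (auto simp: I_def)
lemma I_2: "c \<in> I \<Longrightarrow> fst c = 2 \<Longrightarrow> \<exists>j. c = (2,j) \<and> j \<in> {1..n-1} \<and> mx j"
  by (auto simp: I_def)

lemma tights_zero: "c \<in> I \<Longrightarrow> tights c (\<lambda>_. 0) \<longleftrightarrow> fst c \<noteq> 2"
  by (erule I_cases) (auto simp: tights_def)

lemma full_vert: "vert (ind 1 (n-1))"
  using ind_vert[of 1 "n-1"] n2 p1 pn by auto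

lemma tights_full: "c \<in> I \<Longrightarrow> tights c (ind 1 (n-1)) \<longleftrightarrow> fst c \<noteq> 1"
  by (erule I_cases) (auto simp: tights_def ind_def)

lemma distinguish:
  assumes c: "c \<in> I" and c': "c' \<in> I" and ne: "c \<noteq> c'"
  shows "\<exists>t. vert t \<and> tights c t \<noteq> tights c' t"
proof (cases "fst c = fst c'")
  case False
  show ?thesis
  proof (cases "fst c = 2 \<or> fst c' = 2")
    case True
    then show ?thesis using zero_vert tights_zero[OF c] tights_zero[OF c'] False by metis
  next
    case F2: False
    have "fst c = 1 \<or> fst c' = 1" using I_fst[OF c] I_fst[OF c'] False F2 by auto
    then show ?thesis using full_vert tights_full[OF c] tights_full[OF c'] False by metis
  qed
next
  case True
  from c show ?thesis
  proof (cases rule: I_cases)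
    case (E k)
    note ck = this
    obtain j where cj: "c' = (0,j)" "j \<in> {2..n-1}" using I_0[OF c'] True ck by auto
    then have jk: "j \<noteq> k" using ne ck by auto
    show ?thesis
    proof (cases "p k")
      case True
      have "vert (ind 1 (k-1))" using ind_vert[of 1 "k-1"] ck True p1 by auto
      moreover have "tights c (ind 1 (k-1)) \<noteq> tights c' (ind 1 (k-1))"
        using ck cj jk by (auto simp: tights_def ind_def)
      ultimately show ?thesis by blast
    next
      case False
      have "vert (ind k (n-1))" using ind_vert[of k "n-1"] ck False pn by auto
      moreover have "tights c (ind k (n-1)) \<noteq> tights c' (ind k (n-1))"
        using ck cj jk by (auto simp: tights_def ind_def)
      ultimately show ?thesis by blast
    qed
  next
    case (L k)
    note ck = this
    obtain j where cj: "c' = (1,j)" "j \<in> {1..n-1}" "mn j" using I_1[OF c'] True ck by auto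
    then have jk: "j \<noteq> k" using ne ck by auto
    show ?thesis
    proof (cases "k < j")
      case True
      then have "\<not> p (Suc k)" using ck cj by (auto simp: mn_def)
      then have "vert (ind (Suc k) (n-1))" using ind_vert[of "Suc k" "n-1"] ck pn by auto
      moreover have "tights c (ind (Suc k) (n-1)) \<noteq> tights c' (ind (Suc k) (n-1))"
        using ck cj True by (auto simp: tights_def ind_def)
      ultimately show ?thesis by blast
    next
      case False
      then have jk': "j < k" using jk by auto
      then have "\<not> p (Suc j)" using ck cj by (auto simp: mn_def)
      then have "vert (ind (Suc j) (n-1))" using ind_vert[of "Suc j" "n-1"] cj pn by auto
      moreover have "tights c (ind (Suc j) (n-1)) \<noteq> tights c' (ind (Suc j) (n-1))"
        using ck cj jk' by (auto simp: tights_def ind_def)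
      ultimately show ?thesis by blast
    qed
  next
    case (U k)
    note ck = this
    obtain j where cj: "c' = (2,j)" "j \<in> {1..n-1}" "mx j" using I_2[OF c'] True ck by auto
    then have jk: "j \<noteq> k" using ne ck by auto
    show ?thesis
    proof (cases "k < j")
      case True
      have "vert (ind 1 k)" using ind_vert[of 1 k] ck p1 by (auto simp: mx_def)
      moreover have "tights c (ind 1 k) \<noteq> tights c' (ind 1 k)"
        using ck cj True by (auto simp: tights_def ind_def)
      ultimately show ?thesis by blast
    next
      case False
      then have jk': "j < k" using jk by auto
      have "vert (ind 1 j)" using ind_vert[of 1 j] cj p1 by (auto simp: mx_def)
      moreover have "tights c (ind 1 j) \<noteq> tights c' (ind 1 j)"
        using ck cj jk' by (auto simp: tights_def ind_def)
      ultimately show ?thesis by blast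
    qed
  qed
qed

lemma finite_I: "finite I" by (simp add: I_def)

lemma hs_mem: "c \<in> I \<Longrightarrow> x \<in> hs c \<longleftrightarrow> sats c (s x)"
  by (simp add: hs_def sat_iff)

lemma s_vert: "good t \<Longrightarrow> k \<le> n \<Longrightarrow> s (xs t) k = t k"
  using s_xs by (auto simp: good_def)

lemma wit_mem: assumes c: "c \<in> I" and c': "c' \<in> I"
  shows "xs (wit c) \<in> hs c' \<longleftrightarrow> sats c' (wit c)"
proof -
  have eq: "k \<le> n \<Longrightarrow> s (xs (wit c)) k = wit c k" for k using s_xs wit_0[OF c] by auto
  have "xs (wit c) \<in> hs c' \<longleftrightarrow> sats c' (s (xs (wit c)))" by (rule hs_mem[OF c'])
  also have "\<dots> \<longleftrightarrow> sats c' (wit c)" by (rule sats_cong[OF c']) (rule eq)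
  finally show ?thesis .
qed

lemma wit_out: "c \<in> I \<Longrightarrow> xs (wit c) \<notin> hs c"
  using wit_mem[of c c] wit_not[of c] by simp

lemma wit_in: "c \<in> I \<Longrightarrow> c' \<in> I \<Longrightarrow> c' \<noteq> c \<Longrightarrow> xs (wit c) \<in> hs c'"
  using wit_mem[of c c'] wit_other[of c c'] by simp

lemma hs_inj: assumes c: "c \<in> I" and c': "c' \<in> I" and eq: "hs c = hs c'" shows "c = c'"
proof (rule ccontr)
  assume ne: "c \<noteq> c'"
  have "xs (wit c') \<in> hs c" using wit_in[OF c' c] ne by simp
  moreover have "xs (wit c') \<notin> hs c'" using wit_out[OF c'] .
  ultimately show False using eq by simp
qed

lemma H_sub_hs: "c \<in> I \<Longrightarrow> H \<subseteq> hs c" by (auto simp: H_def)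

lemma av_nz: assumes c: "c \<in> I" shows "av c \<noteq> 0"
proof
  assume a: "av c = 0"
  have "base \<in> hs c" using base_V V_sub_H H_sub_hs[OF c] by blast
  then have "0 \<le> bv c" using a by (auto simp: hs_def split: if_splits)
  then have "xs (wit c) \<in> hs c" using a by (simp add: hs_def)
  then show False using wit_out[OF c] by blast
qed

definition fm :: "nat \<times> nat \<Rightarrow> (real^'n) set" where
  "fm c = convex hull V \<inter> {x. av c \<bullet> x = bv c}"

lemma fm_inj: "inj_on fm I"
proof (rule inj_onI, rule ccontr)
  fix c c' assume c: "c \<in> I" and c': "c' \<in> I" and eq: "fm c = fm c'" and ne: "c \<noteq> c'"
  obtain t where vt: "vert t" and d: "tights c t \<noteq> tights c' t" using distinguish[OF c c' ne] by blast
  have g: "good t" using vt by (simp add: vert_def)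
  have xV: "xs t \<in> convex hull V" using vert_V[OF vt] hull_subset[of V convex] by blast
  have tt: "xs t \<in> fm d \<longleftrightarrow> tights d t" if d: "d \<in> I" for d
  proof -
    have "xs t \<in> fm d \<longleftrightarrow> av d \<bullet> xs t = bv d" using xV by (simp add: fm_def)
    also have "\<dots> \<longleftrightarrow> tights d (s (xs t))" by (rule tight_iff[OF d])
    also have "\<dots> \<longleftrightarrow> tights d t" by (rule tights_cong[OF d]) (rule s_vert[OF g])
    finally show ?thesis .
  qed
  have t1: "xs t \<in> fm c \<longleftrightarrow> tights c t" by (rule tt[OF c])
  have t2: "xs t \<in> fm c' \<longleftrightarrow> tights c' t" by (rule tt[OF c'])
  show False using t1 t2 eq d by simp
qed

theorem facets_card: "card {C. C facet_of convex hull V} = card I"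
proof -
  define S0 where "S0 = convex hull V"
  have S0H: "S0 = H" by (simp add: S0_def hull_eq)
  define F where "F = hs ` I"
  define \<sigma> where "\<sigma> h = (SOME c. c \<in> I \<and> hs c = h)" for h
  have \<sigma>F: "h \<in> F \<Longrightarrow> \<sigma> h \<in> I \<and> hs (\<sigma> h) = h" for h
    unfolding \<sigma>_def F_def by (rule someI_ex) auto
  have \<sigma>hs: "c \<in> I \<Longrightarrow> \<sigma> (hs c) = c" for c
    using \<sigma>F[of "hs c"] hs_inj by (auto simp: F_def)
  have finF: "finite F" using finite_I by (simp add: F_def)
  have affA: "affine hull S0 \<subseteq> {x. S x n = real (h n)}"
  proof -
    have A: "{x. S x n = real (h n)} = {x. (\<Sum>i=1..n. e i) \<bullet> x = real (h n)}"
      by (simp add: inner_sum_e S_def)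
    have "V \<subseteq> {x. S x n = real (h n)}" using V_sub_H by (auto simp: H_def)
    then have "affine hull V \<subseteq> {x. S x n = real (h n)}"
      by (intro hull_minimal) (auto simp: A affine_hyperplane)
    then show ?thesis by (simp add: S0_def)
  qed
  have IF: "\<Inter>F = (\<Inter>c\<in>I. hs c)" by (simp add: F_def)
  have seq: "S0 = affine hull S0 \<inter> \<Inter>F"
  proof
    have "S0 \<subseteq> affine hull S0" by (rule hull_subset)
    moreover have "S0 \<subseteq> \<Inter>F" unfolding IF S0H H_def by blast
    ultimately show "S0 \<subseteq> affine hull S0 \<inter> \<Inter>F" by blast
    show "affine hull S0 \<inter> \<Inter>F \<subseteq> S0" using affA unfolding IF S0H H_def by blast
  qed
  have faceq: "av (\<sigma> h) \<noteq> 0 \<and> h = {x. av (\<sigma> h) \<bullet> x \<le> bv (\<sigma> h)}" if "h \<in> F" for h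
  proof -
    have a: "\<sigma> h \<in> I" "hs (\<sigma> h) = h" using \<sigma>F[OF that] by auto
    show ?thesis using a(2)[symmetric] av_nz[OF a(1)] unfolding hs_def by simp
  qed
  have psub: "\<And>F'. F' \<subset> F \<Longrightarrow> S0 \<subset> affine hull S0 \<inter> \<Inter>F'"
  proof -
    fix F' assume F': "F' \<subset> F"
    then obtain h0 where "h0 \<in> F" "h0 \<notin> F'" by blast
    then obtain c where c: "c \<in> I" "hs c \<notin> F'" unfolding F_def by blast
    define w where "w = xs (wit c)"
    have "w \<in> affine hull V" using xs_aff wit_0[OF c(1)] by (simp add: w_def)
    then have "w \<in> affine hull S0" by (simp add: S0_def)
    moreover have "w \<in> \<Inter>F'"
    proof
      fix h' assume "h' \<in> F'"
      then have "h' \<in> hs ` I" using F' by (auto simp: F_def)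
      then obtain c' where "c' \<in> I" "h' = hs c'" by blast
      moreover have "c' \<noteq> c" using c(2) \<open>h' \<in> F'\<close> \<open>h' = hs c'\<close> by auto
      ultimately show "w \<in> h'" using wit_in[OF c(1) \<open>c' \<in> I\<close>] by (simp add: w_def)
    qed
    moreover have "w \<notin> S0" using wit_out[OF c(1)] H_sub_hs[OF c(1)] S0H by (auto simp: w_def)
    moreover have "S0 \<subseteq> affine hull S0 \<inter> \<Inter>F'" using seq F' by blast
    ultimately show "S0 \<subset> affine hull S0 \<inter> \<Inter>F'" by blast
  qed
  have fe: "C facet_of S0 \<longleftrightarrow> (\<exists>h. h \<in> F \<and> C = S0 \<inter> {x. av (\<sigma> h) \<bullet> x = bv (\<sigma> h)})" for C
    by (rule facet_of_polyhedron_explicit[OF finF seq faceq psub])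
  have "{C. C facet_of S0} = fm ` I"
  proof
    show "{C. C facet_of S0} \<subseteq> fm ` I"
    proof
      fix C assume "C \<in> {C. C facet_of S0}"
      then obtain h where "h \<in> F" "C = S0 \<inter> {x. av (\<sigma> h) \<bullet> x = bv (\<sigma> h)}" using fe by blast
      then have "\<sigma> h \<in> I" "C = fm (\<sigma> h)" using \<sigma>F by (auto simp: fm_def S0_def)
      then show "C \<in> fm ` I" by blast
    qed
    show "fm ` I \<subseteq> {C. C facet_of S0}"
    proof
      fix C assume "C \<in> fm ` I"
      then obtain c where c: "c \<in> I" "C = fm c" by blast
      have "hs c \<in> F" using c(1) by (simp add: F_def)
      moreover have "C = S0 \<inter> {x. av (\<sigma> (hs c)) \<bullet> x = bv (\<sigma> (hs c))}"
        by (simp only: \<sigma>hs[OF c(1)] c(2) fm_def S0_def)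
      ultimately show "C \<in> {C. C facet_of S0}" using fe by blast
    qed
  qed
  then show ?thesis using card_image[OF fm_inj] by (simp add: S0_def)
qed

definition NE :: "nat set" where "NE = {k. 0 < k \<and> k < n \<and> p k \<and> \<not> p (Suc k)}"
definition ENp :: "nat set" where "ENp = {k. 2 \<le> k \<and> k + 2 \<le> n \<and> \<not> p k \<and> p (Suc k)}"

lemma card_I: "card I = n + card NE + card ENp"
proof -
  define A1 where "A1 = {k\<in>{1..n-1}. mn k}"
  define A2 where "A2 = {k\<in>{1..n-1}. mx k}"
  have fin: "finite A1" "finite A2" by (auto simp: A1_def A2_def)
  have cI: "card I = (n - 2) + card A1 + card A2"
  proof -
    have d1: "Pair (0::nat) ` {2..n-1} \<inter> Pair 1 ` A1 = {}" "(Pair (0::nat) ` {2..n-1} \<union> Pair 1 ` A1) \<inter> Pair 2 ` A2 = {}"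
      by auto
    have "card I = card (Pair (0::nat) ` {2..n-1} \<union> Pair (1::nat) ` A1) + card (Pair (2::nat) ` A2)"
      unfolding I_def A1_def[symmetric] A2_def[symmetric]
      by (rule card_Un_disjoint) (use fin d1 in auto)
    also have "card (Pair (0::nat) ` {2..n-1} \<union> Pair (1::nat) ` A1) = card (Pair (0::nat) ` {2..n-1}) + card (Pair (1::nat) ` A1)"
      by (rule card_Un_disjoint) (use fin d1 in auto)
    also have "card (Pair (0::nat) ` {2..n-1}) = n - 2" by (simp add: card_image inj_on_def)
    also have "card (Pair (1::nat) ` A1) = card A1" by (simp add: card_image inj_on_def)
    also have "card (Pair (2::nat) ` A2) = card A2" by (simp add: card_image inj_on_def)
    finally show ?thesis .
  qed
  define T where "T = {1, n-1}"
  have finT: "finite NE" "finite ENp"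
    by (rule finite_subset[of _ "{..n}"]; auto simp: NE_def ENp_def)+
  have A1eq: "A1 = NE \<union> (A1 \<inter> T)" and dA1: "NE \<inter> (A1 \<inter> T) = {}"
    using p1 pn by (auto simp: A1_def NE_def T_def mn_def)
  have A2eq: "A2 = ENp \<union> (A2 \<inter> T)" and dA2: "ENp \<inter> (A2 \<inter> T) = {}"
    using p1 pn n2 by (auto simp: A2_def ENp_def T_def mx_def)
  have c1: "card A1 = card NE + card (A1 \<inter> T)"
    using card_Un_disjoint[of NE "A1 \<inter> T"] A1eq dA1 finT fin by (auto simp: T_def)
  have c2: "card A2 = card ENp + card (A2 \<inter> T)"
    using card_Un_disjoint[of ENp "A2 \<inter> T"] A2eq dA2 finT fin by (auto simp: T_def)
  have cT: "card (A1 \<inter> T) + card (A2 \<inter> T) = 2"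
  proof (cases "n = 2")
    case True
    have m1: "mn 1" "mx 1" unfolding mn_def mx_def using True p1 pn by (auto simp: numeral_2_eq_2)
    have "T = {1}" using True by (simp add: T_def)
    then have "A1 \<inter> T = {1}" "A2 \<inter> T = {1}" using m1 True by (auto simp: A1_def A2_def)
    then show ?thesis by simp
  next
    case False
    then have n3: "3 \<le> n" using n2 by auto
    have "(A1 \<inter> T) \<inter> (A2 \<inter> T) = {}" using n3 by (auto simp: A1_def A2_def T_def mn_def mx_def)
    moreover have "(A1 \<inter> T) \<union> (A2 \<inter> T) = T" using n3 pn p1 by (auto simp: A1_def A2_def T_def mn_def mx_def)
    moreover have "card T = 2" using n3 by (simp add: T_def)
    ultimately show ?thesis using card_Un_disjoint[of "A1 \<inter> T" "A2 \<inter> T"] by (simp add: T_def)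
  qed
  show ?thesis using cI c1 c2 cT n2 by simp
qed

end

lemma ht_0[simp]: "ht P 0 = 0" by (simp add: ht_def)
lemma ht_Suc: "k < length P \<Longrightarrow> ht P (Suc k) = ht P k + (if P ! k then 1 else 0)"
  by (simp add: ht_def take_Suc_conv_app_nth)
lemma ht_le: "ht P k \<le> k"
proof -
  have "ht P k \<le> length (take k P)" unfolding ht_def by (rule length_filter_le)
  then show ?thesis by simp
qed
lemma ht_Cons: "ht (x # xs) (Suc k) = (if x then 1 else 0) + ht xs k"
  by (simp add: ht_def)
lemma ht_full: "ht P (length P) = length (filter id P)" by (simp add: ht_def)

lemma nE_take: "k \<le> length P \<Longrightarrow> length (filter Not (take k P)) = k - ht P k"
proof -
  assume k: "k \<le> length P"
  have "length (filter id (take k P)) + length (filter (\<lambda>x. \<not> id x) (take k P)) = length (take k P)"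
    by (rule sum_length_filter_compl)
  then show ?thesis using k by (simp add: ht_def)
qed

lemma filter_take_le: "length (filter f (take k xs)) \<le> length (filter f xs)"
  by (metis append_take_drop_id filter_append length_append le_add1)

lemma eh_len: "length (east_heights xs h) = length (filter Not xs)"
  by (induction xs h rule: east_heights.induct) auto

lemma eh_ge: "i < length (east_heights xs h) \<Longrightarrow> h \<le> east_heights xs h ! i"
proof (induction xs h arbitrary: i rule: east_heights.induct)
  case (2 xs h) then show ?case by fastforce
next
  case (3 xs h) then show ?case by (cases i) auto
qed simp

lemma eh_lo: "i < length (filter Not (take k xs)) \<Longrightarrow> east_heights xs h ! i \<le> h + ht xs k"
proof (induction xs h arbitrary: i k rule: east_heights.induct)
  case (1 h) then show ?case by simp
next
  case (2 xs h)
  then obtain k' where k: "k = Suc k'" by (cases k) auto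
  then show ?case using 2 by (auto simp: ht_Cons)
next
  case (3 xs h)
  then obtain k' where k: "k = Suc k'" by (cases k) auto
  show ?case
  proof (cases i)
    case 0 then show ?thesis by simp
  next
    case (Suc i')
    then show ?thesis using 3 k by (auto simp: ht_Cons)
  qed
qed

lemma eh_hi: "length (filter Not (take k xs)) \<le> i \<Longrightarrow> i < length (filter Not xs) \<Longrightarrow>
    h + ht xs k \<le> east_heights xs h ! i"
proof (induction xs h arbitrary: i k rule: east_heights.induct)
  case (1 h) then show ?case by simp
next
  case (2 xs h)
  show ?case
  proof (cases k)
    case 0 then show ?thesis using eh_ge[of i "True # xs" h] 2 by (simp add: eh_len)
  next
    case (Suc k')
    then show ?thesis using 2 by (auto simp: ht_Cons)
  qed
next
  case (3 xs h)
  show ?case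
  proof (cases k)
    case 0 then show ?thesis using eh_ge[of i "False # xs" h] 3 by (simp add: eh_len)
  next
    case (Suc k')
    then obtain i' where i: "i = Suc i'" using 3 by (cases i) auto
    then show ?thesis using 3 Suc by (auto simp: ht_Cons)
  qed
qed

lemma ht_path: "k \<le> n \<Longrightarrow> ht (path_of n B) k = card (B \<inter> {1..k})"
proof (induction k)
  case 0 then show ?case by simp
next
  case (Suc k)
  have len: "length (path_of n B) = n" by (simp add: path_of_def)
  have nth: "path_of n B ! k = (Suc k \<in> B)" using Suc.prems by (simp add: path_of_def nth_map del: upt_Suc)
  have "{1..Suc k} = insert (Suc k) {1..k}" by auto
  then have "B \<inter> {1..Suc k} = (if Suc k \<in> B then insert (Suc k) (B \<inter> {1..k}) else B \<inter> {1..k})" by auto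
  then have "card (B \<inter> {1..Suc k}) = card (B \<inter> {1..k}) + (if Suc k \<in> B then 1 else 0)" by auto
  then show ?case using Suc ht_Suc[of k "path_of n B"] len nth by simp
qed


lemma pt_inj: "inj (pt X)"
proof (rule injI)
  fix k k' assume "pt X k = pt X k'"
  then have "k - ht X k = k' - ht X k'" "ht X k = ht X k'" by (auto simp: pt_def)
  then show "k = k'" using ht_le[of X k] ht_le[of X k'] by linarith
qed

theorem corollary4p4:
  fixes m r :: nat and P Q :: "bool list" and coord :: "nat \<Rightarrow> 'n::finite"
  assumes "lattice_path m r P" and "lattice_path m r Q"
    and "never_above P Q"
    and "\<forall>k. 0 < k \<and> k < m + r \<longrightarrow> ht P k < ht Q k"
    and "border_strip (region_cells m P Q)"
    and "bij_betw coord {1..m+r} (UNIV :: 'n set)"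
  shows "card {F. F facet_of lpm_polytope m r P Q coord} = m + r + card (outside_corners P Q)"
proof -
  define n where "n = m + r"
  have lP: "length P = n" "length (filter id P) = r" using assms(1) by (auto simp: lattice_path_def n_def)
  have lQ: "length Q = n" "length (filter id Q) = r" using assms(2) by (auto simp: lattice_path_def n_def)
  have mP: "length (filter Not P) = m"
    using sum_length_filter_compl[of id P] lP by (simp add: n_def)
  have mQ: "length (filter Not Q) = m"
    using sum_length_filter_compl[of id Q] lQ by (simp add: n_def)
  have htPn: "ht P n = r" using ht_full[of P] lP by simp
  have htQn: "ht Q n = r" using ht_full[of Q] lQ by simp
  have strict: "\<And>k. 0 < k \<Longrightarrow> k < n \<Longrightarrow> ht P k < ht Q k" using assms(4) n_def by auto
  have bs: "border_strip (region_cells m P Q)" by (rule assms(5))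
  note bs' = bs[unfolded border_strip_def]
  have nsq: "\<not> (\<exists>i j. (i, j) \<in> region_cells m P Q \<and> (Suc i, j) \<in> region_cells m P Q \<and>
            (i, Suc j) \<in> region_cells m P Q \<and> (Suc i, Suc j) \<in> region_cells m P Q)"
    using bs' by (elim conjE)
  have nemp: "region_cells m P Q \<noteq> {}" using bs' by (elim conjE)
  have gap: "ht Q k = ht P k + 1" if k: "0 < k" "k < n" for k
  proof (rule ccontr)
    assume ne: "ht Q k \<noteq> ht P k + 1"
    have g2: "ht P k + 2 \<le> ht Q k" using strict[OF k] ne by auto
    define b where "b = ht P k"
    define a where "a = length (filter Not (take k P))"
    define aQ where "aQ = length (filter Not (take k Q))"
    have a_eq: "a = k - b" using nE_take[of k P] lP k by (simp add: a_def b_def)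
    have aQ_eq: "aQ = k - ht Q k" using nE_take[of k Q] lQ k by (simp add: aQ_def)
    have "ht Q k \<le> k" by (rule ht_le)
    then have a2: "aQ + 2 \<le> a" using g2 a_eq aQ_eq b_def by auto
    have am: "a \<le> m" using filter_take_le[of Not k P] mP by (simp add: a_def)
    define i0 where "i0 = a - 2"
    have cell: "(i, j) \<in> region_cells m P Q" if ij: "i = i0 \<or> i = Suc i0" "j = b \<or> j = Suc b" for i j
    proof -
      have i: "i < a" "aQ \<le> i" "i < m" using ij a2 am i0_def by auto
      have "east_heights P 0 ! i \<le> 0 + ht P k" using eh_lo[of i k P 0] i a_def by simp
      moreover have "0 + ht Q k \<le> east_heights Q 0 ! i" using eh_hi[of k Q i 0] i aQ_def mQ by simp
      ultimately show ?thesis using ij g2 i unfolding region_cells_def b_def by auto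
    qed
    have "(i0, b) \<in> region_cells m P Q" "(Suc i0, b) \<in> region_cells m P Q"
         "(i0, Suc b) \<in> region_cells m P Q" "(Suc i0, Suc b) \<in> region_cells m P Q"
      using cell by auto
    then show False using nsq by blast
  qed
  have n2: "2 \<le> n"
  proof -
    obtain i j where ij: "(i, j) \<in> region_cells m P Q" using nemp by auto
    then have i: "i < m" "j < east_heights Q 0 ! i" by (auto simp: region_cells_def)
    have "i < length (filter Not (take n Q))" using i lQ mQ by simp
    then have "east_heights Q 0 ! i \<le> 0 + ht Q n" by (rule eh_lo)
    then have "1 \<le> r" using i htQn by simp
    then show ?thesis using i by (simp add: n_def)
  qed
  have h1: "ht P 1 = (if P ! 0 then 1 else 0)" "ht Q 1 = (if Q ! 0 then 1 else 0)"
    using ht_Suc[of 0 P] ht_Suc[of 0 Q] lP lQ n2 by auto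
  have g0: "ht Q 1 = ht P 1 + 1" by (rule gap) (use n2 in auto)
  have p1: "\<not> P ! 0" and q1: "Q ! 0" using h1 g0
    by (cases "P ! 0"; cases "Q ! 0"; simp)+
  have hn: "ht P n = ht P (n-1) + (if P ! (n-1) then 1 else 0)" "ht Q n = ht Q (n-1) + (if Q ! (n-1) then 1 else 0)"
    using ht_Suc[of "n-1" P] ht_Suc[of "n-1" Q] lP lQ n2 by (auto simp: Suc_diff_1)
  have g1: "ht Q (n-1) = ht P (n-1) + 1" using gap[of "n-1"] n2 by simp
  define xn where "xn = (if P ! (n-1) then 1 else (0::nat))"
  define yn where "yn = (if Q ! (n-1) then 1 else (0::nat))"
  have "ht P n = ht P (n-1) + xn" "ht Q n = ht Q (n-1) + yn" using hn by (simp_all add: xn_def yn_def)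
  then have e1: "xn = 1 + yn" using htPn htQn g1 by linarith
  have pn: "P ! (n-1)" and qn: "\<not> Q ! (n-1)" using e1
    by (cases "P ! (n-1)"; cases "Q ! (n-1)"; simp add: xn_def yn_def)+
  have pq: "Q ! (k-1) = P ! (k-1)" if k: "2 \<le> k" "k \<le> n - 1" for k
  proof -
    have kk: "Suc (k-1) = k" using k by simp
    have kl: "k - 1 < length P" "k - 1 < length Q" using k lP lQ by auto
    have a: "ht P k = ht P (k-1) + (if P ! (k-1) then 1 else 0)" "ht Q k = ht Q (k-1) + (if Q ! (k-1) then 1 else 0)"
      using ht_Suc[OF kl(1)] ht_Suc[OF kl(2)] unfolding kk by auto
    have b: "ht Q k = ht P k + 1" by (rule gap) (use k in auto)
    have c: "ht Q (k-1) = ht P (k-1) + 1" by (rule gap) (use k in auto)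
    define x where "x = (if P ! (k-1) then 1 else (0::nat))"
    define y where "y = (if Q ! (k-1) then 1 else (0::nat))"
    have "ht P k = ht P (k-1) + x" "ht Q k = ht Q (k-1) + y" using a by (simp_all add: x_def y_def)
    then have "x = y" using b c by linarith
    then show ?thesis by (cases "P ! (k-1)"; cases "Q ! (k-1)") (simp_all add: x_def y_def)
  qed
  have l_p1: "\<not> (\<lambda>k. P ! (k-1)) 1" using p1 by simp
  have l_pn: "(\<lambda>k. P ! (k-1)) n" using pn by simp
  have l_h0: "ht P 0 = 0" by simp
  have l_hS: "ht P (Suc k) = ht P k + (if (\<lambda>k. P ! (k-1)) (Suc k) then 1 else 0)" if "k < n" for k
  proof -
    have "k < length P" using lP that by simp
    then show ?thesis using ht_Suc[of k P] by simp
  qed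
  have l_bij: "bij_betw coord {1..n} (UNIV :: 'n set)" using assms(6) unfolding n_def .
  have loc: "snake n (\<lambda>k. P ! (k-1)) (ht P) coord"
    by (rule snake.intro[OF n2 l_p1 l_pn l_h0 l_hS l_bij])
  interpret S: snake n "\<lambda>k. P ! (k-1)" "ht P" coord by (rule loc)
  have bases: "lpm_bases m r P Q = S.BS"
  proof (rule set_eqI)
    fix B
    have lb: "B \<in> lpm_bases m r P Q \<longleftrightarrow> B \<subseteq> {1..n} \<and> card B = r \<and> stays_between P Q (path_of n B)"
      by (simp add: lpm_bases_def n_def)
    have sb: "B \<in> S.BS \<longleftrightarrow> B \<subseteq> {1..n} \<and> card B = r \<and>
        (\<forall>k\<in>{1..n-1}. ht P k \<le> card (B \<inter> {1..k}) \<and> card (B \<inter> {1..k}) \<le> ht P k + 1)"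
      by (simp add: S.BS_def htPn)
    show "B \<in> lpm_bases m r P Q \<longleftrightarrow> B \<in> S.BS"
    proof (cases "B \<subseteq> {1..n} \<and> card B = r")
      case False
      then show ?thesis unfolding lb sb by blast
    next
      case True
      have len: "length (path_of n B) = n" by (simp add: path_of_def)
      have hp: "k \<le> n \<Longrightarrow> ht (path_of n B) k = card (B \<inter> {1..k})" for k by (rule ht_path)
      have cn: "card (B \<inter> {1..n}) = r" using True by (simp add: Int_absorb2)
      have "stays_between P Q (path_of n B) \<longleftrightarrow>
            (\<forall>k\<in>{1..n-1}. ht P k \<le> card (B \<inter> {1..k}) \<and> card (B \<inter> {1..k}) \<le> ht P k + 1)"
      proof
        assume st: "stays_between P Q (path_of n B)"
        show "\<forall>k\<in>{1..n-1}. ht P k \<le> card (B \<inter> {1..k}) \<and> card (B \<inter> {1..k}) \<le> ht P k + 1"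
        proof
          fix k assume k: "k \<in> {1..n-1}"
          then have "ht P k \<le> ht (path_of n B) k \<and> ht (path_of n B) k \<le> ht Q k"
            using st len by (auto simp: stays_between_def)
          then show "ht P k \<le> card (B \<inter> {1..k}) \<and> card (B \<inter> {1..k}) \<le> ht P k + 1"
            using hp[of k] gap[of k] k by auto
        qed
      next
        assume c: "\<forall>k\<in>{1..n-1}. ht P k \<le> card (B \<inter> {1..k}) \<and> card (B \<inter> {1..k}) \<le> ht P k + 1"
        show "stays_between P Q (path_of n B)"
          unfolding stays_between_def len
        proof (intro allI impI)
          fix k assume k: "k \<le> n"
          show "ht P k \<le> ht (path_of n B) k \<and> ht (path_of n B) k \<le> ht Q k"
          proof (cases "k = 0")
            case True then show ?thesis by simp
          next
            case False
            show ?thesis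
            proof (cases "k = n")
              case True then show ?thesis using hp[of n] cn htPn htQn by simp
            next
              case False
              then have "k \<in> {1..n-1}" "0 < k" "k < n" using k \<open>k \<noteq> 0\<close> by auto
              then show ?thesis using c hp[of k] gap[of k] by auto
            qed
          qed
        qed
      qed
      then show ?thesis unfolding lb sb using True by blast
    qed
  qed
  have fn: "(\<lambda>B. \<Sum>b\<in>B. axis (coord b) (1::real)) = S.vB"
    by (simp add: fun_eq_iff S.vB_def S.e_def)
  have poly: "lpm_polytope m r P Q coord = convex hull S.V"
    unfolding lpm_polytope_def S.V_def bases fn ..
  have NEset: "S.NE = {k. 0 < k \<and> k < length P \<and> P ! (k - 1) \<and> \<not> P ! k}"
    unfolding S.NE_def using lP by simp
  have NEeq: "{pt P k |k. 0 < k \<and> k < length P \<and> P ! (k - 1) \<and> \<not> P ! k} = pt P ` S.NE"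
    unfolding NEset by blast
  have Beq: "{k. 0 < k \<and> k < n \<and> \<not> Q ! (k - 1) \<and> Q ! k} = S.ENp"
  proof (rule set_eqI)
    fix k
    show "k \<in> {k. 0 < k \<and> k < n \<and> \<not> Q ! (k - 1) \<and> Q ! k} \<longleftrightarrow> k \<in> S.ENp"
    proof (cases "k = 1 \<or> k = n - 1 \<or> k = 0 \<or> k \<ge> n")
      case True
      then show ?thesis unfolding S.ENp_def mem_Collect_eq using q1 qn n2 by auto
    next
      case False
      then have "Q ! (k-1) = P ! (k-1)" "Q ! k = P ! k" using pq[of k] pq[of "Suc k"] by auto
      then show ?thesis unfolding S.ENp_def mem_Collect_eq using False by auto
    qed
  qed
  have ENset: "S.ENp = {k. 0 < k \<and> k < length Q \<and> \<not> Q ! (k - 1) \<and> Q ! k}"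
    unfolding Beq[symmetric] using lQ by simp
  have ENeq: "{pt Q k |k. 0 < k \<and> k < length Q \<and> \<not> Q ! (k - 1) \<and> Q ! k} = pt Q ` S.ENp"
    unfolding ENset by blast
  have finNE: "finite S.NE" unfolding NEset by (rule finite_subset[of _ "{..length P}"]) auto
  have finEN: "finite S.ENp" unfolding ENset by (rule finite_subset[of _ "{..length Q}"]) auto
  have disj: "pt P ` S.NE \<inter> pt Q ` S.ENp = {}"
  proof (rule ccontr)
    assume "pt P ` S.NE \<inter> pt Q ` S.ENp \<noteq> {}"
    then obtain k k' where kk: "k \<in> S.NE" "k' \<in> S.ENp" "pt P k = pt Q k'" by blast
    then have e: "k - ht P k = k' - ht Q k'" "ht P k = ht Q k'" by (auto simp: pt_def)
    then have "k = k'" using ht_le[of P k] ht_le[of Q k'] by linarith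
    moreover have "0 < k" "k < n" using kk lP unfolding NEset by auto
    ultimately show False using gap[of k] e(2) by simp
  qed
  have corners: "card (outside_corners P Q) = card S.NE + card S.ENp"
  proof -
    have "outside_corners P Q = pt P ` S.NE \<union> pt Q ` S.ENp"
      unfolding outside_corners_def NEeq ENeq ..
    then have "card (outside_corners P Q) = card (pt P ` S.NE) + card (pt Q ` S.ENp)"
      using card_Un_disjoint[OF _ _ disj] finNE finEN by simp
    also have "\<dots> = card S.NE + card S.ENp"
      using card_image[OF inj_on_subset[OF pt_inj]] by simp
    finally show ?thesis .
  qed
  have "card {F. F facet_of lpm_polytope m r P Q coord} = card S.I"
    unfolding poly by (rule S.facets_card)
  also have "\<dots> = n + card S.NE + card S.ENp" by (rule S.card_I)
  finally show ?thesis using corners by (simp add: n_def)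
qed

end
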